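(* Let $\mathcal{X}$ be a countable set, $\mathcal{D}$ a distribution on $\mathcal{X}\times\{0,1\}$, $\alpha,\epsilon>0$, and let $(f_1,f_2)$ be a pair of models output by Reconcile$(f_1^0,f_2^0,\alpha,\epsilon,\mathcal{D})$ for some models $f_1^0,f_2^0:\mathcal{X}\to[0,1]$. Let $E\subseteq\mathcal{X}$ with $\mu(E)>0$ and let $p_j(E)=\mathbb{E}_{(x,y)\sim\mathcal{D}}[f_j(x)\mid x\in E]$ for $j=1,2$. Then $$|p_1(E)-p_2(E)|\le\frac{\alpha}{\mu(E)}+\epsilon.$$
   Context: $\mu(S)=\Pr_{(x,y)\sim\mathcal{D}}[x\in S]$. Brier score $B(f,\mathcal{D})=\mathbb{E}[(f(x)-y)^2]$. $U_\epsilon(f_1,f_2)=\{x:|f_1(x)-f_2(x)|>\epsilon\}$, $U^>_\epsilon$, $U^<_\epsilon$ its subsets where $f_1>f_2$, resp. $f_1<f_2$. Patch: $h(x,f;g,\Delta)=f(x)+\Delta$ if $g(x)=1$, else $f(x)$. $\mathrm{Round}(v;m)$ is a closest point to $v$ in $\{k/m:k\in\mathbb{Z},-m\le k\le m\}$. Algorithm Reconcile$(f_1,f_2,\alpha,\epsilon,\mathcal{D})$: set $m=\lceil \frac{2}{\sqrt{\alpha}\epsilon}\rceil$, $t_1=t_2=0$, $f_1^0=f_1$, $f_2^0=f_2$. While $\mu(U_\epsilon(f_1^{t_1},f_2^{t_2}))\ge\alpha$: for each $\bullet\in\{>,<\}$, $i\in\{1,2\}$ let $v_*^\bullet=\mathbb{E}[y\mid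 x\in U^\bullet_\epsilon(f_1^{t_1},f_2^{t_2})]$, $v_i^\bullet=\mathbb{E}[f_i^{t_i}(x)\mid x\in U^\bullet_\epsilon(f_1^{t_1},f_2^{t_2})]$; choose $(i,\bullet)$ maximizing $\mu(U^\bullet_\epsilon(f_1^{t_1},f_2^{t_2}))(v_*^\bullet-v_i^\bullet)^2$ (product $0$ for mass-zero sets; ties arbitrary); let $g$ be the indicator of that set, $\tilde\Delta=\mathbb{E}[y\mid g=1]-\mathbb{E}[f_i^{t_i}(x)\mid g=1]$, $\Delta=\mathrm{Round}(\tilde\Delta;m)$; set $f_i^{t_i+1}=h(\cdot,f_i^{t_i};g,\Delta)$ and increment $t_i$. On exit, output $(f_1^{t_1},f_2^{t_2})$. *)

theory Defs
  imports "HOL-Probability.Probability"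
begin

text \<open>A distribution D on X x {0,1} is a pmf on 'a x real supported on labels 0/1.
  mu(S) = Pr[x in S].\<close>
definition mu :: "('a \<times> real) pmf \<Rightarrow> 'a set \<Rightarrow> real" where
  "mu D S = measure_pmf.prob D {z. fst z \<in> S}"

text \<open>Conditional expectation E[g(x,y) | x in S] (convention: 0 if mu S = 0).\<close>
definition cond_exp :: "('a \<times> real) pmf \<Rightarrow> 'a set \<Rightarrow> ('a \<times> real \<Rightarrow> real) \<Rightarrow> real" where
  "cond_exp D S g = measure_pmf.expectation D (\<lambda>z. indicator S (fst z) * g z) / mu D S"

definition Brier :: "('a \<Rightarrow> real) \<Rightarrow> ('a \<times> real) pmf \<Rightarrow> real" where
  "Brier f D = measure_pmf.expectation D (\<lambda>z. (f (fst z) - snd z)^2)"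

definition U_gt :: "real \<Rightarrow> ('a \<Rightarrow> real) \<Rightarrow> ('a \<Rightarrow> real) \<Rightarrow> 'a set" where
  "U_gt \<epsilon> f1 f2 = {x. \<bar>f1 x - f2 x\<bar> > \<epsilon> \<and> f1 x > f2 x}"

definition U_lt :: "real \<Rightarrow> ('a \<Rightarrow> real) \<Rightarrow> ('a \<Rightarrow> real) \<Rightarrow> 'a set" where
  "U_lt \<epsilon> f1 f2 = {x. \<bar>f1 x - f2 x\<bar> > \<epsilon> \<and> f1 x < f2 x}"

definition U_eps :: "real \<Rightarrow> ('a \<Rightarrow> real) \<Rightarrow> ('a \<Rightarrow> real) \<Rightarrow> 'a set" where
  "U_eps \<epsilon> f1 f2 = {x. \<bar>f1 x - f2 x\<bar> > \<epsilon>}"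

definition patch :: "('a \<Rightarrow> real) \<Rightarrow> ('a \<Rightarrow> bool) \<Rightarrow> real \<Rightarrow> 'a \<Rightarrow> real" where
  "patch f g \<Delta> x = (if g x then f x + \<Delta> else f x)"

definition grid :: "nat \<Rightarrow> real set" where
  "grid m = {of_int k / of_nat m | k. - int m \<le> k \<and> k \<le> int m}"

text \<open>r is a (possibly non-unique) valid value of Round(v;m).\<close>
definition is_round :: "real \<Rightarrow> nat \<Rightarrow> real \<Rightarrow> bool" where
  "is_round v m r \<longleftrightarrow> r \<in> grid m \<and> (\<forall>r'\<in>grid m. \<bar>r - v\<bar> \<le> \<bar>r' - v\<bar>)"

text \<open>The set U^bullet (b = True means '>', b = False means '<').\<close>
definition Uset :: "real \<Rightarrow> ('a \<Rightarrow> real) \<Rightarrow> ('a \<Rightarrow> real) \<Rightarrow> bool \<Rightarrow> 'a set" where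
  "Uset \<epsilon> f1 f2 b = (if b then U_gt \<epsilon> f1 f2 else U_lt \<epsilon> f1 f2)"

definition sel :: "nat \<Rightarrow> ('a \<Rightarrow> real) \<Rightarrow> ('a \<Rightarrow> real) \<Rightarrow> ('a \<Rightarrow> real)" where
  "sel i f1 f2 = (if i = 1 then f1 else f2)"

definition score :: "('a \<times> real) pmf \<Rightarrow> real \<Rightarrow> ('a \<Rightarrow> real) \<Rightarrow> ('a \<Rightarrow> real) \<Rightarrow> nat \<Rightarrow> bool \<Rightarrow> real" where
  "score D \<epsilon> f1 f2 i b =
     (let S = Uset \<epsilon> f1 f2 b in
      if mu D S = 0 then 0
      else mu D S * (cond_exp D S snd - cond_exp D S (\<lambda>z. sel i f1 f2 (fst z)))^2)"

definition reconcile_m :: "real \<Rightarrow> real \<Rightarrow> nat" where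
  "reconcile_m \<alpha> \<epsilon> = nat \<lceil>2 / (sqrt \<alpha> * \<epsilon>)\<rceil>"

text \<open>One iteration of the while loop of Reconcile (nondeterministic in ties and rounding).
  The counters t_1, t_2 are irrelevant to the output and omitted.\<close>
definition reconcile_step ::
  "('a \<times> real) pmf \<Rightarrow> real \<Rightarrow> real \<Rightarrow>
   (('a \<Rightarrow> real) \<times> ('a \<Rightarrow> real)) \<Rightarrow> (('a \<Rightarrow> real) \<times> ('a \<Rightarrow> real)) \<Rightarrow> bool" where
  "reconcile_step D \<alpha> \<epsilon> st st' \<longleftrightarrow>
     (let f1 = fst st; f2 = snd st in
      mu D (U_eps \<epsilon> f1 f2) \<ge> \<alpha> \<and>
      (\<exists>i b \<Delta>. i \<in> {1,2} \<and>
         (\<forall>i'\<in>{1,2}. \<forall>b'. score D \<epsilon> f1 f2 i' b' \<le> score D \<epsilon> f1 f2 i b) \<and>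
         (let S = Uset \<epsilon> f1 f2 b;
              \<Delta>t = cond_exp D S snd - cond_exp D S (\<lambda>z. sel i f1 f2 (fst z)) in
          is_round \<Delta>t (reconcile_m \<alpha> \<epsilon>) \<Delta> \<and>
          st' = (if i = 1 then (patch f1 (\<lambda>x. x \<in> S) \<Delta>, f2)
                 else (f1, patch f2 (\<lambda>x. x \<in> S) \<Delta>)))))"

definition reconcile_output ::
  "('a \<times> real) pmf \<Rightarrow> real \<Rightarrow> real \<Rightarrow> ('a \<Rightarrow> real) \<Rightarrow> ('a \<Rightarrow> real) \<Rightarrow>
   ('a \<Rightarrow> real) \<Rightarrow> ('a \<Rightarrow> real) \<Rightarrow> bool" where
  "reconcile_output D \<alpha> \<epsilon> f1 f2 g1 g2 \<longleftrightarrow>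
     (reconcile_step D \<alpha> \<epsilon>)\<^sup>*\<^sup>* (f1, f2) (g1, g2) \<and> \<not> (mu D (U_eps \<epsilon> g1 g2) \<ge> \<alpha>)"

end

theory Submission
  imports Defs
begin

lemma integrable_bdd:
  fixes D :: "('a \<times> real) pmf" and f :: "'a \<times> real \<Rightarrow> real" and B :: real
  assumes "\<And>z. \<bar>f z\<bar> \<le> B"
  shows "integrable (measure_pmf D) f"
  by (rule measure_pmf.integrable_const_bound[where B=B]) (auto simp: assms)

lemma mu_int: "mu D S = measure_pmf.expectation D (\<lambda>z. indicator S (fst z))"
proof -
  have e: "(\<lambda>z. indicator S (fst z) :: real) = indicator {z. fst z \<in> S}"
    by (auto simp: indicator_def)
  have "measure_pmf.expectation D (indicator {z. fst z \<in> S} :: _ \<Rightarrow> real) = measure_pmf.prob D {z. fst z \<in> S}"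
    by (simp add: integral_indicator)
  then show ?thesis unfolding mu_def e by simp
qed

lemma cond_exp_lt:
  fixes D :: "('a \<times> real) pmf"
  assumes b1: "\<And>x. \<bar>g1 x\<bar> \<le> B" and b2: "\<And>x. \<bar>g2 x\<bar> \<le> B"
    and mpos: "mu D S > 0" and gap: "\<And>x. x \<in> S \<Longrightarrow> g1 x - g2 x > \<epsilon>" and ep: "\<epsilon> > 0"
  shows "cond_exp D S (\<lambda>z. g2 (fst z)) < cond_exp D S (\<lambda>z. g1 (fst z))"
proof -
  have B0: "B \<ge> 0" using b1[of undefined] by simp
  have i1: "integrable (measure_pmf D) (\<lambda>z. indicator S (fst z) * g1 (fst z))"
    by (rule integrable_bdd[where B=B]) (auto simp: indicator_def b1 B0)
  have i2: "integrable (measure_pmf D) (\<lambda>z. indicator S (fst z) * g2 (fst z))"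
    by (rule integrable_bdd[where B=B]) (auto simp: indicator_def b2 B0)
  have i3: "integrable (measure_pmf D) (\<lambda>z. \<epsilon> * indicator S (fst z))"
    by (rule integrable_bdd[where B=\<epsilon>]) (auto simp: indicator_def ep less_imp_le)
  have "measure_pmf.expectation D (\<lambda>z. indicator S (fst z) * g2 (fst z) + \<epsilon> * indicator S (fst z))
      \<le> measure_pmf.expectation D (\<lambda>z. indicator S (fst z) * g1 (fst z))"
    by (rule integral_mono[OF Bochner_Integration.integrable_add[OF i2 i3] i1])
       (auto simp: indicator_def dest: gap intro: less_imp_le)
  then have "measure_pmf.expectation D (\<lambda>z. indicator S (fst z) * g2 (fst z)) + \<epsilon> * mu D S
      \<le> measure_pmf.expectation D (\<lambda>z. indicator S (fst z) * g1 (fst z))"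
    using i2 i3 by (simp add: mu_int)
  then have "measure_pmf.expectation D (\<lambda>z. indicator S (fst z) * g2 (fst z))
      < measure_pmf.expectation D (\<lambda>z. indicator S (fst z) * g1 (fst z))"
    using mpos ep by (smt (verit) mult_pos_pos)
  then show ?thesis unfolding cond_exp_def using mpos by (simp add: divide_strict_right_mono)
qed

lemma grid_bound: "r \<in> grid m \<Longrightarrow> \<bar>r\<bar> \<le> 1"
proof -
  assume "r \<in> grid m"
  then obtain k where k: "- int m \<le> k" "k \<le> int m" and r: "r = real_of_int k / real m"
    unfolding grid_def by blast
  show ?thesis
  proof (cases "m = 0")
    case True then show ?thesis using r by simp
  next
    case False
    then have mp: "real m > 0" by simp
    have "\<bar>real_of_int k\<bar> \<le> real m" using k by linarith
    then show ?thesis using mp unfolding r by (simp add: abs_divide)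
  qed
qed

lemma zero_grid: "0 \<in> grid m"
  unfolding grid_def by (rule CollectI, rule exI[of _ 0]) simp

lemma round_props:
  assumes "is_round v m r"
  shows "\<bar>r\<bar> \<le> 1" "v \<le> 0 \<Longrightarrow> r \<le> 0" "v \<ge> 0 \<Longrightarrow> r \<ge> 0"
proof -
  have g: "r \<in> grid m" and all: "\<forall>r'\<in>grid m. \<bar>r - v\<bar> \<le> \<bar>r' - v\<bar>"
    using assms unfolding is_round_def by blast+
  have c: "\<bar>r - v\<bar> \<le> \<bar>0 - v\<bar>" using bspec[OF all zero_grid] .
  show "\<bar>r\<bar> \<le> 1" using grid_bound[OF g] .
  show "v \<le> 0 \<Longrightarrow> r \<le> 0" using c by linarith
  show "v \<ge> 0 \<Longrightarrow> r \<ge> 0" using c by linarith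
qed

definition Inv :: "(('a \<Rightarrow> real) \<times> ('a \<Rightarrow> real)) \<Rightarrow> bool" where
  "Inv st \<longleftrightarrow> (\<forall>x. \<bar>fst st x - snd st x\<bar> \<le> 1) \<and> (\<exists>B. \<forall>x. \<bar>fst st x\<bar> \<le> B \<and> \<bar>snd st x\<bar> \<le> B)"

lemma sq_lt: "(0::real) < a \<Longrightarrow> 0 < u \<Longrightarrow> u < w \<Longrightarrow> a * u^2 < a * w^2"
  by (simp add: power_strict_mono)

lemma step_inv:
  fixes D :: "('a \<times> real) pmf"
  assumes st: "reconcile_step D \<alpha> \<epsilon> st st'" and inv: "Inv st" and ep: "\<epsilon> > 0"
  shows "Inv st'"
proof -
  obtain g1 g2 where stdef: "st = (g1, g2)" by (cases st)
  from inv obtain B where gap1: "\<And>x. \<bar>g1 x - g2 x\<bar> \<le> 1"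
    and b1: "\<And>x. \<bar>g1 x\<bar> \<le> B" and b2: "\<And>x. \<bar>g2 x\<bar> \<le> B"
    unfolding Inv_def stdef by auto
  have ex: "\<exists>i b \<Delta>. i \<in> {1,2} \<and>
      (\<forall>i'\<in>{1,2}. \<forall>b'. score D \<epsilon> g1 g2 i' b' \<le> score D \<epsilon> g1 g2 i b) \<and>
      is_round (cond_exp D (Uset \<epsilon> g1 g2 b) snd
                 - cond_exp D (Uset \<epsilon> g1 g2 b) (\<lambda>z. sel i g1 g2 (fst z))) (reconcile_m \<alpha> \<epsilon>) \<Delta> \<and>
      st' = (if i = 1 then (patch g1 (\<lambda>x. x \<in> Uset \<epsilon> g1 g2 b) \<Delta>, g2)
                 else (g1, patch g2 (\<lambda>x. x \<in> Uset \<epsilon> g1 g2 b) \<Delta>))"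
    using st unfolding reconcile_step_def stdef Let_def fst_conv snd_conv by blast
  then obtain i b \<Delta> where i: "i \<in> {1,2}"
    and mx: "\<forall>i'\<in>{1,2}. \<forall>b'. score D \<epsilon> g1 g2 i' b' \<le> score D \<epsilon> g1 g2 i b"
    and rd: "is_round (cond_exp D (Uset \<epsilon> g1 g2 b) snd
                 - cond_exp D (Uset \<epsilon> g1 g2 b) (\<lambda>z. sel i g1 g2 (fst z))) (reconcile_m \<alpha> \<epsilon>) \<Delta>"
    and st': "st' = (if i = 1 then (patch g1 (\<lambda>x. x \<in> Uset \<epsilon> g1 g2 b) \<Delta>, g2)
                 else (g1, patch g2 (\<lambda>x. x \<in> Uset \<epsilon> g1 g2 b) \<Delta>))"
    by blast
  define S where "S = Uset \<epsilon> g1 g2 b"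
  define vs where "vs = cond_exp D S snd"
  define v1 where "v1 = cond_exp D S (\<lambda>z. g1 (fst z))"
  define v2 where "v2 = cond_exp D S (\<lambda>z. g2 (fst z))"
  have rd': "is_round (vs - (if i = 1 then v1 else v2)) (reconcile_m \<alpha> \<epsilon>) \<Delta>"
    using rd unfolding S_def vs_def v1_def v2_def sel_def by (cases "i = 1") auto
  have dB: "\<bar>\<Delta>\<bar> \<le> 1" using round_props(1)[OF rd'] .
  have sc: "score D \<epsilon> g1 g2 j b = (if mu D S = 0 then 0 else mu D S * (vs - (if j = 1 then v1 else v2))^2)" for j
    unfolding score_def S_def vs_def v1_def v2_def sel_def Let_def by (cases "j = 1") auto
  have m1: "score D \<epsilon> g1 g2 1 b \<le> score D \<epsilon> g1 g2 i b" and m2: "score D \<epsilon> g1 g2 2 b \<le> score D \<epsilon> g1 g2 i b"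
    using mx by auto
  have mu0: "mu D S \<ge> 0" unfolding mu_def by simp
  have sgn: "(if b = (i = 1) then \<Delta> \<le> 0 else \<Delta> \<ge> 0)"
  proof (cases "mu D S = 0")
    case True
    then have "vs = 0" "v1 = 0" "v2 = 0" unfolding vs_def v1_def v2_def cond_exp_def by auto
    then show ?thesis using round_props(2,3)[OF rd'] by auto
  next
    case False
    then have mp: "mu D S > 0" using mu0 by linarith
    have lt: "if b then v2 < v1 else v1 < v2"
    proof (cases b)
      case True
      have "v2 < v1" unfolding v1_def v2_def
        by (rule cond_exp_lt[where B=B, OF b1 b2 mp _ ep]) (use True in \<open>auto simp: S_def Uset_def U_gt_def\<close>)
      then show ?thesis using True by simp
    next
      case False
      have "v1 < v2" unfolding v1_def v2_def
        by (rule cond_exp_lt[where B=B, OF b2 b1 mp _ ep]) (use False in \<open>auto simp: S_def Uset_def U_lt_def\<close>)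
      then show ?thesis using False by simp
    qed
    show ?thesis
    proof (cases "i = 1")
      case True
      then show ?thesis
      proof (cases b)
        case b: True
        have "vs - v1 \<le> 0"
        proof (rule ccontr)
          assume "\<not> vs - v1 \<le> 0"
          then have "mu D S * (vs - v1)^2 < mu D S * (vs - v2)^2"
            using sq_lt[OF mp, of "vs - v1" "vs - v2"] lt b by auto
          then show False using m2 True sc[of 1] sc[of 2] False by auto
        qed
        then show ?thesis using round_props(2)[OF rd'] True b by auto
      next
        case b: False
        have "vs - v1 \<ge> 0"
        proof (rule ccontr)
          assume "\<not> vs - v1 \<ge> 0"
          then have "mu D S * (v1 - vs)^2 < mu D S * (v2 - vs)^2"
            using sq_lt[OF mp, of "v1 - vs" "v2 - vs"] lt b by auto
          then show False using m2 True sc[of 1] sc[of 2] False by (auto simp: power2_commute)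
        qed
        then show ?thesis using round_props(3)[OF rd'] True b by auto
      qed
    next
      case i2: False
      then show ?thesis
      proof (cases b)
        case b: True
        have "vs - v2 \<ge> 0"
        proof (rule ccontr)
          assume "\<not> vs - v2 \<ge> 0"
          then have "mu D S * (v2 - vs)^2 < mu D S * (v1 - vs)^2"
            using sq_lt[OF mp, of "v2 - vs" "v1 - vs"] lt b by auto
          then show False using m1 i2 sc[of 1] sc[of i] False by (auto simp: power2_commute)
        qed
        then show ?thesis using round_props(3)[OF rd'] i2 b by auto
      next
        case b: False
        have "vs - v2 \<le> 0"
        proof (rule ccontr)
          assume "\<not> vs - v2 \<le> 0"
          then have "mu D S * (vs - v2)^2 < mu D S * (vs - v1)^2"
            using sq_lt[OF mp, of "vs - v2" "vs - v1"] lt b by auto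
          then show False using m1 i2 sc[of 1] sc[of i] False by auto
        qed
        then show ?thesis using round_props(2)[OF rd'] i2 b by auto
      qed
    qed
  qed
  have inS: "x \<in> S \<Longrightarrow> (if b then g1 x - g2 x > \<epsilon> else g2 x - g1 x > \<epsilon>)" for x
    unfolding S_def Uset_def U_gt_def U_lt_def by (cases b) auto
  show ?thesis
  proof (cases "i = 1")
    case True
    have "\<bar>patch g1 (\<lambda>x. x \<in> S) \<Delta> x - g2 x\<bar> \<le> 1" for x
      using gap1[of x] inS[of x] sgn True dB ep unfolding patch_def
      by (cases b; cases "x \<in> S") (auto simp: abs_le_iff)
    moreover have "\<bar>patch g1 (\<lambda>x. x \<in> S) \<Delta> x\<bar> \<le> B + 1 \<and> \<bar>g2 x\<bar> \<le> B + 1" for x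
      using b1[of x] b2[of x] dB unfolding patch_def by (auto simp: abs_le_iff)
    ultimately show ?thesis unfolding st' Inv_def using True S_def by auto
  next
    case False
    have "\<bar>g1 x - patch g2 (\<lambda>x. x \<in> S) \<Delta> x\<bar> \<le> 1" for x
      using gap1[of x] inS[of x] sgn False dB ep unfolding patch_def
      by (cases b; cases "x \<in> S") (auto simp: abs_le_iff)
    moreover have "\<bar>g1 x\<bar> \<le> B + 1 \<and> \<bar>patch g2 (\<lambda>x. x \<in> S) \<Delta> x\<bar> \<le> B + 1" for x
      using b1[of x] b2[of x] dB unfolding patch_def by (auto simp: abs_le_iff)
    ultimately show ?thesis unfolding st' Inv_def using False S_def by auto
  qed
qed

theorem corollary1:
  fixes D :: "('a::countable \<times> real) pmf"
    and f10 f20 f1 f2 :: "'a \<Rightarrow> real"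
    and \<alpha> \<epsilon> :: real and E :: "'a set"
  assumes labels: "\<forall>z\<in>set_pmf D. snd z \<in> {0, 1}"
    and alpha_pos: "\<alpha> > 0" and eps_pos: "\<epsilon> > 0"
    and f10_range: "\<forall>x. f10 x \<in> {0..1}" and f20_range: "\<forall>x. f20 x \<in> {0..1}"
    and out: "reconcile_output D \<alpha> \<epsilon> f10 f20 f1 f2"
    and E_pos: "mu D E > 0"
  shows "\<bar>cond_exp D E (\<lambda>z. f1 (fst z)) - cond_exp D E (\<lambda>z. f2 (fst z))\<bar>
           \<le> \<alpha> / mu D E + \<epsilon>"
proof -
  have star: "(reconcile_step D \<alpha> \<epsilon>)\<^sup>*\<^sup>* (f10, f20) (f1, f2)" and muU: "mu D (U_eps \<epsilon> f1 f2) < \<alpha>"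
    using out unfolding reconcile_output_def by auto
  have init: "Inv (f10, f20)" unfolding Inv_def
    using f10_range f20_range by (auto intro!: exI[of _ 1] simp: abs_le_iff) 
      (smt (verit) atLeastAtMost_iff)+
  have inv_all: "Inv st" if "(reconcile_step D \<alpha> \<epsilon>)\<^sup>*\<^sup>* (f10, f20) st" for st
    using that
  proof (induction rule: rtranclp_induct)
    case base
    show ?case by (rule init)
  next
    case (step y z)
    show ?case by (rule step_inv[OF step(2) step(3) eps_pos])
  qed
  have "Inv (f1, f2)" by (rule inv_all[OF star])
  then obtain B where gap: "\<And>x. \<bar>f1 x - f2 x\<bar> \<le> 1"
    and b1: "\<And>x. \<bar>f1 x\<bar> \<le> B" and b2: "\<And>x. \<bar>f2 x\<bar> \<le> B"
    unfolding Inv_def by auto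
  have B0: "B \<ge> 0" using b1[of undefined] by simp
  define U where "U = U_eps \<epsilon> f1 f2"
  have i1: "integrable (measure_pmf D) (\<lambda>z. indicator E (fst z) * f1 (fst z))"
    by (rule integrable_bdd[where B=B]) (auto simp: indicator_def b1 B0)
  have i2: "integrable (measure_pmf D) (\<lambda>z. indicator E (fst z) * f2 (fst z))"
    by (rule integrable_bdd[where B=B]) (auto simp: indicator_def b2 B0)
  have i3: "integrable (measure_pmf D) (\<lambda>z. indicator U (fst z) + \<epsilon> * indicator E (fst z))"
    by (rule integrable_bdd[where B="1+\<epsilon>"]) (auto simp: indicator_def eps_pos less_imp_le)
  have iU: "integrable (measure_pmf D) (\<lambda>z. indicator U (fst z) :: real)"
    by (rule integrable_bdd[where B="1"]) (auto simp: indicator_def)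
  have iE: "integrable (measure_pmf D) (\<lambda>z. indicator E (fst z) :: real)"
    by (rule integrable_bdd[where B="1"]) (auto simp: indicator_def)
  have diff: "cond_exp D E (\<lambda>z. f1 (fst z)) - cond_exp D E (\<lambda>z. f2 (fst z))
      = measure_pmf.expectation D (\<lambda>z. indicator E (fst z) * f1 (fst z) - indicator E (fst z) * f2 (fst z)) / mu D E"
    unfolding cond_exp_def using i1 i2 by (simp add: diff_divide_distrib)
  have "\<bar>measure_pmf.expectation D (\<lambda>z. indicator E (fst z) * f1 (fst z) - indicator E (fst z) * f2 (fst z))\<bar>
      \<le> measure_pmf.expectation D (\<lambda>z. \<bar>indicator E (fst z) * f1 (fst z) - indicator E (fst z) * f2 (fst z)\<bar>)"
    by (rule integral_abs_bound)
  also have "\<dots> \<le> measure_pmf.expectation D (\<lambda>z. indicator U (fst z) + \<epsilon> * indicator E (fst z))"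
  proof (rule integral_mono[OF _ i3])
    show "integrable (measure_pmf D) (\<lambda>z. \<bar>indicator E (fst z) * f1 (fst z) - indicator E (fst z) * f2 (fst z)\<bar>)"
      using i1 i2 by auto
    fix z
    show "\<bar>indicator E (fst z) * f1 (fst z) - indicator E (fst z) * f2 (fst z)\<bar>
          \<le> indicator U (fst z) + \<epsilon> * indicator E (fst z)"
      using gap[of "fst z"] eps_pos unfolding U_def U_eps_def indicator_def
      by (auto simp: right_diff_distrib[symmetric])
  qed
  also have "\<dots> = mu D U + \<epsilon> * mu D E"
    using iU iE by (simp add: mu_int)
  finally have "\<bar>cond_exp D E (\<lambda>z. f1 (fst z)) - cond_exp D E (\<lambda>z. f2 (fst z))\<bar> \<le> (mu D U + \<epsilon> * mu D E) / mu D E"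
    unfolding diff using E_pos by (simp add: divide_right_mono)
  also have "\<dots> \<le> \<alpha> / mu D E + \<epsilon>"
    using E_pos muU unfolding U_def by (simp add: add_divide_distrib divide_right_mono)
  finally show ?thesis .
qed

end
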